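(* There exist total computable functions $f,g:\omega^2\to\omega$ such that for all $x,y\in\omega$, $x\,E^{ce}_{\mathrm{set}}\,y$ if and only if $f(x,y)\,E^{ce}_3\,g(x,y)$.
   Context: $W_e$ is the $e$-th c.e. set; $A^{[n]}=\{x:\langle x,n\rangle\in A\}$ is the $n$-th column of $A\subseteq\omega$. $i\,E^{ce}_{\mathrm{set}}\,j\iff\{W_i^{[n]}:n\in\omega\}=\{W_j^{[n]}:n\in\omega\}$. $i\,E^{ce}_3\,j\iff$ for every $n$, $W_i^{[n]}\triangle W_j^{[n]}$ is finite. *)

theory Defs
  imports Main "HOL-Library.Nat_Bijection"
begin

text \<open>Kleene partial recursive functions, with programs coded directly by natural
numbers (an acceptable Goedel numbering). A code is prod_encode (tag, payload):
  tag 0: zero function; tag 1: successor of the first argument;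
  tag 2, payload i: projection onto argument i;
  tag 3, payload prod_encode (f, list_encode gs): composition f(g_1(xs),...,g_k(xs));
  tag 4, payload prod_encode (f, g): primitive recursion on the first argument;
  tag 5, payload f: unbounded minimisation.
Codes with other tags denote the empty function.
run e xs v means: program e on input list xs halts with output v.\<close>

inductive run :: "nat \<Rightarrow> nat list \<Rightarrow> nat \<Rightarrow> bool" where
  zero: "run (prod_encode (0, p)) xs 0"
| succ: "run (prod_encode (1, p)) (x # xs) (Suc x)"
| proj: "i < length xs \<Longrightarrow> run (prod_encode (2, i)) xs (xs ! i)"
| comp: "list_all2 (\<lambda>g y. run g xs y) gs ys \<Longrightarrow> run f ys v \<Longrightarrow>
           run (prod_encode (3, prod_encode (f, list_encode gs))) xs v"
| prim0: "run f xs v \<Longrightarrow> run (prod_encode (4, prod_encode (f, g))) (0 # xs) v"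
| primS: "run (prod_encode (4, prod_encode (f, g))) (n # xs) u \<Longrightarrow> run g (n # u # xs) v \<Longrightarrow>
           run (prod_encode (4, prod_encode (f, g))) (Suc n # xs) v"
| mu: "run f (y # xs) 0 \<Longrightarrow> (\<forall>z<y. \<exists>w. run f (z # xs) w \<and> w > 0) \<Longrightarrow>
           run (prod_encode (5, f)) xs y"

definition computable2 :: "(nat \<Rightarrow> nat \<Rightarrow> nat) \<Rightarrow> bool" where
  "computable2 f \<longleftrightarrow> (\<exists>e. \<forall>x y. run e [x, y] (f x y))"

definition W :: "nat \<Rightarrow> nat set" where
  "W e = {x. \<exists>v. run e [x] v}"

definition col :: "nat set \<Rightarrow> nat \<Rightarrow> nat set" where
  "col A n = {x. prod_encode (x, n) \<in> A}"

definition Eset :: "nat \<Rightarrow> nat \<Rightarrow> bool" where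
  "Eset i j \<longleftrightarrow> {col (W i) n | n. True} = {col (W j) n | n. True}"

definition E3 :: "nat \<Rightarrow> nat \<Rightarrow> bool" where
  "E3 i j \<longleftrightarrow> (\<forall>n. finite ((col (W i) n - col (W j) n) \<union> (col (W j) n - col (W i) n)))"

end

theory Submission
  imports Defs
begin


lemma l2det: "list_all2 (\<lambda>g y. P g y \<and> (\<forall>v'. P g v' \<longrightarrow> y = v')) gs ys \<Longrightarrow> list_all2 P gs ys' \<Longrightarrow> ys' = ys"
proof (induction gs ys arbitrary: ys' rule: list_all2_induct)
  case Nil then show ?case by simp
next
  case (Cons g gs y ys)
  then show ?case by (auto simp: list_all2_Cons1)
qed

lemma run_det: "run e xs v \<Longrightarrow> run e xs v' \<Longrightarrow> v = v'"
proof (induction e xs v arbitrary: v' rule: run.induct)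
  case (zero p xs)
  then show ?case by (cases rule: run.cases) auto
next
  case (succ p x xs)
  then show ?case by (cases rule: run.cases) auto
next
  case (proj i xs)
  from proj.prems show ?case by (cases rule: run.cases) auto
next
  case (comp xs gs ys f v)
  note IH = comp.IH
  from comp.prems show ?case
  proof (cases rule: run.cases)
    case (comp gs' ys' f')
    have gg: "gs' = gs" and ff: "f' = f" using comp by (auto simp: list_encode_eq)
    have "ys' = ys" by (rule l2det[OF IH(1)]) (use comp gg in simp)
    then have "run f ys v'" using comp ff by simp
    then show ?thesis using IH(2) by blast
  qed (simp_all)
next
  case (prim0 f xs v g)
  note IH = prim0.IH
  from prim0.prems show ?case
  proof (cases rule: run.cases)
    case (prim0 f' g')
    then show ?thesis using IH by simp
  qed simp_all
next
  case (primS f g n xs u v)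
  note IH = primS.IH
  from primS.prems show ?case
  proof (cases rule: run.cases)
    case (primS f' g' u')
    then have "u' = u" using IH(1) by simp
    then show ?thesis using primS IH(2) by simp
  qed simp_all
next
  case (mu f y xs)
  note IH = mu.IH
  from mu.prems show ?case
  proof (cases rule: run.cases)
    case (mu f')
    have ff: "f' = f" using mu by simp
    have h1: "run f (v' # xs) 0" "\<forall>z<v'. \<exists>w. run f (z # xs) w \<and> w > 0" using mu ff by simp_all
    show ?thesis
    proof (rule ccontr)
      assume "y \<noteq> v'"
      then consider "y < v'" | "v' < y" by linarith
      then show False
      proof cases
        case 1
        then obtain w where "run f (y # xs) w" "w > 0" using h1 by blast
        then show False using IH(1) by fastforce
      next
        case 2
        then obtain w where "run f (v' # xs) w" "\<forall>w'. run f (v' # xs) w' \<longrightarrow> w = w'" "w > 0"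
          using IH(2) by blast
        then show False using h1 by simp
      qed
    qed
  qed simp_all
qed

definition rec :: "nat \<Rightarrow> (nat list \<Rightarrow> nat) \<Rightarrow> bool" where
  "rec k F \<longleftrightarrow> (\<exists>e. \<forall>xs. length xs = k \<longrightarrow> run e xs (F xs))"

lemma rec_proj: "i < k \<Longrightarrow> rec k (\<lambda>xs. xs ! i)"
  unfolding rec_def by (rule exI[of _ "prod_encode (2, i)"]) (auto intro: run.proj)

lemma rec_zero: "rec k (\<lambda>xs. 0)"
  unfolding rec_def by (rule exI[of _ "prod_encode (0, 0)"]) (auto intro: run.zero)

lemma rec_succ: "rec 1 (\<lambda>xs. Suc (xs ! 0))"
  unfolding rec_def
proof (rule exI[of _ "prod_encode (1, 0)"], intro allI impI)
  fix xs :: "nat list" assume "length xs = 1"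
  then obtain x where "xs = [x]" by (cases xs) auto
  then show "run (prod_encode (1, 0)) xs (Suc (xs ! 0))" using run.succ[of 0 x "[]"] by simp
qed

lemma rec_comp:
  assumes "rec m H" "\<forall>i<m. rec k (G i)"
  shows "rec k (\<lambda>xs. H (map (\<lambda>i. G i xs) [0..<m]))"
proof -
  obtain h where h: "\<forall>xs. length xs = m \<longrightarrow> run h xs (H xs)" using assms(1) rec_def by auto
  have "\<forall>i. \<exists>g. i < m \<longrightarrow> (\<forall>xs. length xs = k \<longrightarrow> run g xs (G i xs))"
    using assms(2) rec_def by auto
  then obtain ge where ge: "\<And>i. i < m \<Longrightarrow> \<forall>xs. length xs = k \<longrightarrow> run (ge i) xs (G i xs)"
    by metis
  show ?thesis unfolding rec_def
  proof (rule exI[of _ "prod_encode (3, prod_encode (h, list_encode (map ge [0..<m])))"], intro allI impI)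
    fix xs :: "nat list" assume l: "length xs = k"
    have "list_all2 (\<lambda>g y. run g xs y) (map ge [0..<m]) (map (\<lambda>i. G i xs) [0..<m])"
      using ge l by (auto simp: list_all2_conv_all_nth)
    then show "run (prod_encode (3, prod_encode (h, list_encode (map ge [0..<m])))) xs
        (H (map (\<lambda>i. G i xs) [0..<m]))"
      using h by (auto intro: run.comp)
  qed
qed

lemma rec_prim:
  assumes "rec k F" "rec (Suc (Suc k)) Gf"
  shows "rec (Suc k) (\<lambda>xs. rec_nat (F (tl xs)) (\<lambda>n acc. Gf (n # acc # tl xs)) (hd xs))"
proof -
  obtain f where f: "\<forall>xs. length xs = k \<longrightarrow> run f xs (F xs)" using assms(1) rec_def by auto
  obtain g where g: "\<forall>xs. length xs = Suc (Suc k) \<longrightarrow> run g xs (Gf xs)" using assms(2) rec_def by auto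
  have *: "run (prod_encode (4, prod_encode (f, g))) (n # ys)
            (rec_nat (F ys) (\<lambda>n acc. Gf (n # acc # ys)) n)" if "length ys = k" for n ys
  proof (induction n)
    case 0 then show ?case using f that by (auto intro: run.prim0)
  next
    case (Suc n) then show ?case using g that by (auto intro: run.primS)
  qed
  show ?thesis unfolding rec_def
  proof (rule exI[of _ "prod_encode (4, prod_encode (f, g))"], intro allI impI)
    fix xs :: "nat list" assume "length xs = Suc k"
    then obtain n ys where "xs = n # ys" "length ys = k" by (cases xs) auto
    then show "run (prod_encode (4, prod_encode (f, g))) xs
        (rec_nat (F (tl xs)) (\<lambda>n acc. Gf (n # acc # tl xs)) (hd xs))" using * by simp
  qed
qed

lemma rec_cong: "rec k F \<Longrightarrow> (\<And>xs. length xs = k \<Longrightarrow> F xs = G xs) \<Longrightarrow> rec k G"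
  unfolding rec_def by metis

lemma rec_cong': "rec k F \<Longrightarrow> k = k' \<Longrightarrow> (\<And>xs. length xs = k' \<Longrightarrow> F xs = G xs) \<Longrightarrow> rec k' G"
  using rec_cong by blast



lemma comp1: "rec 1 H \<Longrightarrow> rec k G \<Longrightarrow> rec k (\<lambda>xs. H [G xs])"
  using rec_comp[of 1 H k "\<lambda>i. G"] by simp

lemma comp2: "rec 2 H \<Longrightarrow> rec k G1 \<Longrightarrow> rec k G2 \<Longrightarrow> rec k (\<lambda>xs. H [G1 xs, G2 xs])"
proof -
  assume a: "rec 2 H" "rec k G1" "rec k G2"
  have "rec k (\<lambda>xs. H (map (\<lambda>i. (if i = 0 then G1 else G2) xs) [0..<2]))"
    by (rule rec_comp) (use a in auto)
  moreover have "[0..<2] = [0::nat, 1]" by (simp add: upt_rec)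
  ultimately show ?thesis by simp
qed

lemma rk_const: "rec k (\<lambda>xs. c)"
proof (induction c)
  case 0 then show ?case by (rule rec_zero)
next
  case (Suc c)
  from comp1[OF rec_succ Suc] show ?case by simp
qed

lemma rk_proj: "i < k \<Longrightarrow> rec k (\<lambda>xs. xs ! i)" by (rule rec_proj)

lemma rk_Suc: "rec k f \<Longrightarrow> rec k (\<lambda>xs. Suc (f xs))"
  using comp1[OF rec_succ] by simp

lemma len1: "length xs = Suc 0 \<longleftrightarrow> (\<exists>a. xs = [a])" by (cases xs) auto
lemma len2: "length xs = 2 \<longleftrightarrow> (\<exists>a b. xs = [a, b])"
  by (cases xs; cases "tl xs") auto
lemma len2': "length xs = Suc (Suc 0) \<longleftrightarrow> (\<exists>a b. xs = [a, b])"
  using len2 by (simp add: numeral_2_eq_2)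
lemma len3: "length xs = 3 \<longleftrightarrow> (\<exists>a b c. xs = [a, b, c])"
  by (cases xs; cases "tl xs"; cases "tl (tl xs)") auto

lemma rn_add: "rec_nat b (\<lambda>n acc. Suc acc) a = a + (b::nat)" by (induction a) auto
lemma rn_mult: "rec_nat 0 (\<lambda>n acc. acc + b) a = a * (b::nat)" by (induction a) auto
lemma rn_pred: "rec_nat 0 (\<lambda>n acc. n) a = a - (1::nat)" by (induction a) auto
lemma rn_sub: "rec_nat a (\<lambda>n acc. acc - Suc 0) b = a - (b::nat)" by (induction b) auto
lemma rn_tri: "rec_nat 0 (\<lambda>n acc. Suc (acc + n)) a = triangle a" by (induction a) auto

lemma add2: "rec 2 (\<lambda>xs. xs ! 0 + xs ! 1)"
proof -
  have "rec (Suc 1) (\<lambda>xs. rec_nat ((\<lambda>ys. ys ! 0) (tl xs)) (\<lambda>n acc. (\<lambda>zs. Suc (zs ! 1)) (n # acc # tl xs)) (hd xs))"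
    by (rule rec_prim) (intro rk_Suc rk_proj; simp)+
  then show ?thesis by (rule rec_cong') (auto simp: numeral_2_eq_2 len2' rn_add)
qed

lemma rk_add: "rec k f \<Longrightarrow> rec k g \<Longrightarrow> rec k (\<lambda>xs. f xs + g xs)"
  using comp2[OF add2] by simp

lemma mult2: "rec 2 (\<lambda>xs. xs ! 0 * xs ! 1)"
proof -
  have "rec (Suc 1) (\<lambda>xs. rec_nat ((\<lambda>ys. 0) (tl xs)) (\<lambda>n acc. (\<lambda>zs. zs ! 1 + zs ! 2) (n # acc # tl xs)) (hd xs))"
    by (rule rec_prim) (intro rk_add rk_proj rk_const; simp)+
  then show ?thesis by (rule rec_cong') (auto simp: numeral_2_eq_2 len2' rn_mult)
qed

lemma rk_mult: "rec k f \<Longrightarrow> rec k g \<Longrightarrow> rec k (\<lambda>xs. f xs * g xs)"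
  using comp2[OF mult2] by simp

lemma pred1: "rec 1 (\<lambda>xs. xs ! 0 - 1)"
proof -
  have "rec (Suc 0) (\<lambda>xs. rec_nat ((\<lambda>ys. 0) (tl xs)) (\<lambda>n acc. (\<lambda>zs. zs ! 0) (n # acc # tl xs)) (hd xs))"
    by (rule rec_prim) (intro rk_proj rk_const; simp)+
  then show ?thesis by (rule rec_cong') (auto simp: numeral_2_eq_2 len1 rn_pred)
qed

lemma rk_pred: "rec k f \<Longrightarrow> rec k (\<lambda>xs. f xs - 1)"
  using comp1[OF pred1] by simp

lemma sub2: "rec 2 (\<lambda>xs. xs ! 1 - xs ! 0)"
proof -
  have "rec (Suc 1) (\<lambda>xs. rec_nat ((\<lambda>ys. ys ! 0) (tl xs)) (\<lambda>n acc. (\<lambda>zs. zs ! 1 - 1) (n # acc # tl xs)) (hd xs))"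
    by (rule rec_prim) (intro rk_pred rk_proj rk_const; simp)+
  then show ?thesis by (rule rec_cong') (auto simp: numeral_2_eq_2 len2' rn_sub)
qed

lemma rk_sub: "rec k f \<Longrightarrow> rec k g \<Longrightarrow> rec k (\<lambda>xs. f xs - g xs)"
  using comp2[OF sub2, of k g f] by simp

lemma tri1: "rec 1 (\<lambda>xs. triangle (xs ! 0))"
proof -
  have "rec (Suc 0) (\<lambda>xs. rec_nat ((\<lambda>ys. 0) (tl xs)) (\<lambda>n acc. (\<lambda>zs. zs ! 1 + Suc (zs ! 0)) (n # acc # tl xs)) (hd xs))"
    by (rule rec_prim) (intro rk_add rk_Suc rk_proj rk_const; simp)+
  then show ?thesis by (rule rec_cong') (auto simp: numeral_2_eq_2 len1 rn_tri)
qed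

lemma rk_tri: "rec k f \<Longrightarrow> rec k (\<lambda>xs. triangle (f xs))"
  using comp1[OF tri1] by simp

lemma rk_pe: "rec k f \<Longrightarrow> rec k g \<Longrightarrow> rec k (\<lambda>xs. prod_encode (f xs, g xs))"
  unfolding prod_encode_def by (simp add: rk_add rk_tri)

definition recP :: "nat \<Rightarrow> (nat list \<Rightarrow> bool) \<Rightarrow> bool" where
  "recP k P \<longleftrightarrow> rec k (\<lambda>xs. if P xs then 1 else 0)"

lemma rkP_le: assumes "rec k f" "rec k g" shows "recP k (\<lambda>xs. f xs \<le> g xs)"
proof -
  have "rec k (\<lambda>xs. 1 - (f xs - g xs))" by (intro rk_sub rk_const assms)
  then show ?thesis unfolding recP_def by (rule rec_cong) auto
qed

lemma rkP_not: assumes "recP k P" shows "recP k (\<lambda>xs. \<not> P xs)"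
proof -
  have "rec k (\<lambda>xs. 1 - (if P xs then 1 else 0))" by (intro rk_sub rk_const assms[unfolded recP_def])
  then show ?thesis unfolding recP_def by (rule rec_cong) auto
qed

lemma rkP_and: assumes "recP k P" "recP k Q" shows "recP k (\<lambda>xs. P xs \<and> Q xs)"
proof -
  have "rec k (\<lambda>xs. (if P xs then 1 else 0) * (if Q xs then 1 else 0))"
    by (intro rk_mult assms[unfolded recP_def])
  then show ?thesis unfolding recP_def by (rule rec_cong) auto
qed

lemma rkP_or: "recP k P \<Longrightarrow> recP k Q \<Longrightarrow> recP k (\<lambda>xs. P xs \<or> Q xs)"
  using rkP_not[OF rkP_and[OF rkP_not rkP_not]] by simp

lemma rkP_eq: "rec k f \<Longrightarrow> rec k g \<Longrightarrow> recP k (\<lambda>xs. f xs = g xs)"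
  using rkP_and[OF rkP_le rkP_le] by (simp add: order_eq_iff)

lemma rk_if: assumes "recP k P" "rec k f" "rec k g"
  shows "rec k (\<lambda>xs. if P xs then f xs else g xs)"
proof -
  have "rec k (\<lambda>xs. (if P xs then 1 else 0) * f xs + (1 - (if P xs then 1 else 0)) * g xs)"
    by (intro rk_add rk_mult rk_sub rk_const assms[unfolded recP_def] assms)
  then show ?thesis by (rule rec_cong) auto
qed

definition Dg :: "nat \<Rightarrow> nat" where
  "Dg p = rec_nat 0 (\<lambda>m acc. if triangle (Suc acc) \<le> Suc m then Suc acc else acc) p"

lemma Dg_bounds: "triangle (Dg p) \<le> p \<and> p < triangle (Suc (Dg p))"
proof (induction p)
  case 0 then show ?case by (simp add: Dg_def)
next
  case (Suc p)
  have e: "Dg (Suc p) = (if triangle (Suc (Dg p)) \<le> Suc p then Suc (Dg p) else Dg p)"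
    by (simp add: Dg_def)
  show ?case
  proof (cases "triangle (Suc (Dg p)) \<le> Suc p")
    case True
    then show ?thesis using Suc e by simp
  next
    case False
    then show ?thesis using Suc e by simp
  qed
qed

lemma pd_Dg: "prod_decode p = (p - triangle (Dg p), Dg p - (p - triangle (Dg p)))"
proof -
  let ?a = "p - triangle (Dg p)" and ?b = "Dg p - (p - triangle (Dg p))"
  have "?a \<le> Dg p" using Dg_bounds[of p] by (simp; arith)
  then have "?a + ?b = Dg p" by simp
  then have "prod_encode (?a, ?b) = p" unfolding prod_encode_def using Dg_bounds[of p] by simp
  then show ?thesis by (metis prod_encode_inverse)
qed

lemma Dg1: "rec 1 (\<lambda>xs. Dg (xs ! 0))"
proof -
  have "rec (Suc 0) (\<lambda>xs. rec_nat ((\<lambda>ys. 0) (tl xs)) (\<lambda>n acc. (\<lambda>zs. if triangle (Suc (zs ! 1)) \<le> Suc (zs ! 0) then Suc (zs ! 1) else zs ! 1) (n # acc # tl xs)) (hd xs))"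
    by (rule rec_prim) (intro rk_if rkP_le rk_tri rk_Suc rk_proj rk_const; simp)+
  then show ?thesis proof (rule rec_cong')
    fix xs :: "nat list" assume "length xs = 1"
    then obtain a where "xs = [a]" by (auto simp: len1)
    then show "rec_nat ((\<lambda>ys. 0) (tl xs)) (\<lambda>n acc. (\<lambda>zs. if triangle (Suc (zs ! 1)) \<le> Suc (zs ! 0) then Suc (zs ! 1) else zs ! 1) (n # acc # tl xs)) (hd xs) = Dg (xs ! 0)"
      by (simp only: Dg_def list.sel nth_Cons_Suc One_nat_def nth_Cons_0)
  qed simp
qed

lemma rk_Dg: "rec k f \<Longrightarrow> rec k (\<lambda>xs. Dg (f xs))"
  using comp1[OF Dg1] by simp

lemma rk_fst: "rec k f \<Longrightarrow> rec k (\<lambda>xs. fst (prod_decode (f xs)))"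
  unfolding pd_Dg by (simp add: rk_sub rk_tri rk_Dg)

lemma rk_snd: "rec k f \<Longrightarrow> rec k (\<lambda>xs. snd (prod_decode (f xs)))"
  unfolding pd_Dg by (simp add: rk_sub rk_tri rk_Dg)



definition r1 :: "(nat \<Rightarrow> nat) \<Rightarrow> bool" where
  "r1 f \<longleftrightarrow> rec 1 (\<lambda>xs. f (xs ! 0))"

definition rP :: "(nat \<Rightarrow> bool) \<Rightarrow> bool" where
  "rP P \<longleftrightarrow> r1 (\<lambda>x. if P x then 1 else 0)"

lemma rP_recP: "rP P \<longleftrightarrow> recP 1 (\<lambda>xs. P (xs ! 0))"
  by (simp add: rP_def r1_def recP_def)

lemma r1_cong: assumes "r1 f" "\<And>x. f x = g x" shows "r1 g"
proof -
  have "f = g" using assms(2) by (rule ext)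
  then show ?thesis using assms(1) by simp
qed
lemma rP_cong: assumes "rP P" "\<And>x. P x = Q x" shows "rP Q"
proof -
  have "P = Q" using assms(2) by (rule ext)
  then show ?thesis using assms(1) by simp
qed

lemma r1_id: "r1 (\<lambda>x. x)" unfolding r1_def by (rule rk_proj) simp
lemma r1_const: "r1 (\<lambda>x. c)" unfolding r1_def by (rule rk_const)
lemma r1_Suc: "r1 f \<Longrightarrow> r1 (\<lambda>x. Suc (f x))" unfolding r1_def by (rule rk_Suc)
lemma r1_add: "r1 f \<Longrightarrow> r1 g \<Longrightarrow> r1 (\<lambda>x. f x + g x)" unfolding r1_def by (rule rk_add)
lemma r1_mult: "r1 f \<Longrightarrow> r1 g \<Longrightarrow> r1 (\<lambda>x. f x * g x)" unfolding r1_def by (rule rk_mult)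
lemma r1_sub: "r1 f \<Longrightarrow> r1 g \<Longrightarrow> r1 (\<lambda>x. f x - g x)" unfolding r1_def by (rule rk_sub)
lemma r1_pe: "r1 f \<Longrightarrow> r1 g \<Longrightarrow> r1 (\<lambda>x. prod_encode (f x, g x))" unfolding r1_def by (rule rk_pe)
lemma r1_fst: "r1 f \<Longrightarrow> r1 (\<lambda>x. fst (prod_decode (f x)))" unfolding r1_def by (rule rk_fst)
lemma r1_snd: "r1 f \<Longrightarrow> r1 (\<lambda>x. snd (prod_decode (f x)))" unfolding r1_def by (rule rk_snd)
lemma r1_if: "rP P \<Longrightarrow> r1 f \<Longrightarrow> r1 g \<Longrightarrow> r1 (\<lambda>x. if P x then f x else g x)"
  unfolding r1_def rP_recP by (rule rk_if)
lemma rP_le: "r1 f \<Longrightarrow> r1 g \<Longrightarrow> rP (\<lambda>x. f x \<le> g x)"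
  unfolding r1_def rP_recP by (rule rkP_le)
lemma rP_eq: "r1 f \<Longrightarrow> r1 g \<Longrightarrow> rP (\<lambda>x. f x = g x)"
  unfolding r1_def rP_recP by (rule rkP_eq)
lemma rP_not: "rP P \<Longrightarrow> rP (\<lambda>x. \<not> P x)"
  unfolding rP_recP by (rule rkP_not)
lemma rP_and: "rP P \<Longrightarrow> rP Q \<Longrightarrow> rP (\<lambda>x. P x \<and> Q x)"
  unfolding rP_recP by (rule rkP_and)
lemma rP_or: "rP P \<Longrightarrow> rP Q \<Longrightarrow> rP (\<lambda>x. P x \<or> Q x)"
  unfolding rP_recP by (rule rkP_or)
lemma rP_imp: assumes "rP P" "rP Q" shows "rP (\<lambda>x. P x \<longrightarrow> Q x)"
proof -
  have "rP (\<lambda>x. \<not> P x \<or> Q x)" by (intro rP_or rP_not assms)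
  then show ?thesis by (rule rP_cong) blast
qed
lemma rP_iff: "rP P \<Longrightarrow> rP Q \<Longrightarrow> rP (\<lambda>x. P x \<longleftrightarrow> Q x)"
proof -
  assume a: "rP P" "rP Q"
  have "rP (\<lambda>x. (P x \<longrightarrow> Q x) \<and> (Q x \<longrightarrow> P x))" by (intro rP_and rP_imp a)
  then show ?thesis by (rule rP_cong) blast
qed
lemma rP_less: "r1 f \<Longrightarrow> r1 g \<Longrightarrow> rP (\<lambda>x. f x < g x)"
  using rP_le[OF r1_Suc] by (simp add: Suc_le_eq)
lemma rP_const: "rP (\<lambda>x. c)"
  unfolding rP_def by (rule r1_const)

lemma r1_comp: "r1 f \<Longrightarrow> r1 g \<Longrightarrow> r1 (\<lambda>x. f (g x))"
  unfolding r1_def using comp1 by fastforce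
lemma rP_comp: "rP P \<Longrightarrow> r1 g \<Longrightarrow> rP (\<lambda>x. P (g x))"
  unfolding rP_def using r1_comp by fastforce

abbreviation "pf p \<equiv> fst (prod_decode p)"
abbreviation "ps p \<equiv> snd (prod_decode p)"

lemma r1_prim:
  assumes ra: "r1 a" and rb: "r1 (\<lambda>p. b (pf p) (pf (ps p)) (ps (ps p)))" and rn: "r1 n"
  shows "r1 (\<lambda>x. rec_nat (a x) (\<lambda>m acc. b m acc x) (n x))"
proof -
  have "rec 3 (\<lambda>zs. (\<lambda>p. b (pf p) (pf (ps p)) (ps (ps p))) ([prod_encode (zs ! 0, prod_encode (zs ! 1, zs ! 2))] ! 0))"
    by (rule comp1[OF rb[unfolded r1_def]]) (intro rk_pe rk_proj; simp)
  then have G: "rec (Suc (Suc 1)) (\<lambda>zs. b (zs ! 0) (zs ! 1) (zs ! 2))"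
    by (simp add: numeral_3_eq_3)
  have R: "rec (Suc 1) (\<lambda>xs. rec_nat (a (tl xs ! 0)) (\<lambda>m acc. b ((m # acc # tl xs) ! 0) ((m # acc # tl xs) ! 1) ((m # acc # tl xs) ! 2)) (hd xs))"
    using rec_prim[OF ra[unfolded r1_def] G] by simp
  have R': "rec 2 (\<lambda>xs. rec_nat (a (tl xs ! 0)) (\<lambda>m acc. b m acc (tl xs ! 0)) (hd xs))"
    using R by (simp add: numeral_2_eq_2)
  have "rec 1 (\<lambda>xs. (\<lambda>ys. rec_nat (a (tl ys ! 0)) (\<lambda>m acc. b m acc (tl ys ! 0)) (hd ys)) [n (xs ! 0), xs ! 0])"
    by (rule comp2[OF R']) (use rn[unfolded r1_def] in \<open>auto intro: rk_proj\<close>)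
  then show ?thesis unfolding r1_def by (simp add: numeral_2_eq_2)
qed

lemma rn_sum: "rec_nat 0 (\<lambda>m acc. acc + F m) n = (\<Sum>z<n. F z)"
  by (induction n) auto

lemma r1_sum:
  assumes rF: "r1 (\<lambda>p. F (pf p) (ps p))" and rB: "r1 B"
  shows "r1 (\<lambda>x. \<Sum>z<B x. F z x)"
proof -
  have h: "r1 (\<lambda>p. F (pf p) (ps (ps p)))"
    using r1_comp[OF rF, of "\<lambda>p. prod_encode (pf p, ps (ps p))"]
    by (simp add: r1_pe r1_fst r1_snd r1_id)
  have "r1 (\<lambda>x. rec_nat 0 (\<lambda>m acc. acc + F m x) (B x))"
    by (rule r1_prim[where b = "\<lambda>m acc x. acc + F m x"]) (intro r1_const r1_add r1_fst r1_snd r1_id h rB)+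
  then show ?thesis by (simp add: rn_sum)
qed

lemma sum_ind_pos: "0 < (\<Sum>z<(n::nat). if P z then 1 else (0::nat)) \<longleftrightarrow> (\<exists>z<n. P z)"
  by (induction n) (auto simp: less_Suc_eq)

lemma rP_ex:
  assumes rF: "rP (\<lambda>p. P (pf p) (ps p))" and rB: "r1 B"
  shows "rP (\<lambda>x. \<exists>z<B x. P z x)"
proof -
  have "rP (\<lambda>x. 0 < (\<Sum>z<B x. if P z x then 1 else (0::nat)))"
  proof (rule rP_less)
    show "r1 (\<lambda>x. 0)" by (rule r1_const)
    show "r1 (\<lambda>x. \<Sum>z<B x. if P z x then 1 else 0)"
      by (rule r1_sum) (use rF[unfolded rP_def] rB in simp_all)
  qed
  then show ?thesis by (rule rP_cong) (simp add: sum_ind_pos)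
qed

lemma rP_all:
  assumes rF: "rP (\<lambda>p. P (pf p) (ps p))" and rB: "r1 B"
  shows "rP (\<lambda>x. \<forall>z<B x. P z x)"
proof -
  have "rP (\<lambda>x. \<not> (\<exists>z<B x. \<not> P z x))"
    by (rule rP_not, rule rP_ex) (use rP_not[OF rF] rB in simp_all)
  then show ?thesis by (rule rP_cong) auto
qed

lemma rn_iter: "rec_nat c (\<lambda>m acc. h acc) n = (h ^^ n) c"
  by (induction n) auto

lemma r1_iter:
  assumes "r1 h" "r1 n" "r1 c"
  shows "r1 (\<lambda>x. (h ^^ n x) (c x))"
proof -
  have "r1 (\<lambda>x. rec_nat (c x) (\<lambda>m acc. h acc) (n x))"
    by (rule r1_prim[where b = "\<lambda>m acc x. h acc"]) (intro r1_comp[OF assms(1)] r1_fst r1_snd r1_id assms)+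
  then show ?thesis by (simp add: rn_iter)
qed

lemmas r1I = r1_id r1_const r1_Suc r1_add r1_mult r1_sub r1_pe r1_fst r1_snd r1_if
  rP_le rP_less rP_eq rP_not rP_and rP_or rP_imp rP_iff rP_const r1_sum rP_ex rP_all



definition lhd :: "nat \<Rightarrow> nat" where "lhd c = pf (c - 1)"
definition ltl :: "nat \<Rightarrow> nat" where "ltl c = ps (c - 1)"
definition lcons :: "nat \<Rightarrow> nat \<Rightarrow> nat" where "lcons x c = Suc (prod_encode (x, c))"
definition lnth :: "nat \<Rightarrow> nat \<Rightarrow> nat" where "lnth c i = lhd ((ltl ^^ i) c)"
definition llen :: "nat \<Rightarrow> nat" where "llen c = (\<Sum>i<c. if (ltl ^^ i) c = 0 then 0 else 1)"

lemma pd0: "prod_decode 0 = (0, 0)"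
  by (simp add: prod_decode_def prod_decode_aux.simps)

lemma ltl0: "ltl 0 = 0" by (simp add: ltl_def pd0)

lemma ld_eq0: "list_decode x = [] \<longleftrightarrow> x = 0"
  by (cases x) (simp_all split: prod.split)

lemma ld_cons: "c \<noteq> 0 \<Longrightarrow> list_decode c = lhd c # list_decode (ltl c)"
  by (cases c) (auto simp: lhd_def ltl_def split: prod.split)

lemma ld_lcons[simp]: "list_decode (lcons x c) = x # list_decode c"
  by (simp add: lcons_def)

lemma lcons_le[simp]: "lcons x c = list_encode (x # list_decode c)"
  by (simp add: lcons_def)

lemma ld_iter: "list_decode ((ltl ^^ i) c) = drop i (list_decode c)"
proof (induction i)
  case 0 then show ?case by simp
next
  case (Suc i)
  show ?case
  proof (cases "(ltl ^^ i) c = 0")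
    case True
    then have "drop i (list_decode c) = []" using Suc by (simp add: ld_eq0)
    then show ?thesis using True by (simp add: ltl0 drop_Suc drop_tl)
  next
    case False
    have "list_decode (ltl ((ltl ^^ i) c)) = tl (drop i (list_decode c))"
      using Suc ld_cons[OF False] by (metis list.sel(3))
    then show ?thesis by (simp add: drop_Suc drop_tl)
  qed
qed

lemma ld_length_le: "length (list_decode c) \<le> c"
proof (induction c rule: list_decode.induct)
  case 1 then show ?case by simp
next
  case (2 n)
  obtain x y where xy: "prod_decode n = (x, y)" by (cases "prod_decode n")
  have "n = prod_encode (x, y)" using xy by (metis prod_decode_inverse)
  then have "y \<le> n" by (simp add: le_prod_encode_2)
  then show ?case using 2 xy by simp
qed

lemma sum_ind_lt: "(\<Sum>i<(c::nat). if i < l then 1 else (0::nat)) = min l c"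
  by (induction c) auto

lemma llen_eq: "llen c = length (list_decode c)"
proof -
  have "\<And>i. ((ltl ^^ i) c = 0) \<longleftrightarrow> \<not> i < length (list_decode c)"
    using ld_eq0 ld_iter by (metis drop_eq_Nil not_le)
  then have "llen c = (\<Sum>i<c. if i < length (list_decode c) then 1 else 0)"
    unfolding llen_def by (intro sum.cong) auto
  then show ?thesis using sum_ind_lt ld_length_le by (simp add: min_absorb1)
qed

lemma lnth_eq: "i < length (list_decode c) \<Longrightarrow> lnth c i = list_decode c ! i"
proof -
  assume a: "i < length (list_decode c)"
  then have ne: "(ltl ^^ i) c \<noteq> 0" by (metis ld_eq0 ld_iter drop_eq_Nil not_le)
  have "lnth c i = hd (list_decode ((ltl ^^ i) c))" unfolding lnth_def using ld_cons[OF ne] by simp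
  also have "\<dots> = list_decode c ! i" using a by (simp add: ld_iter hd_drop_conv_nth)
  finally show ?thesis .
qed

lemma llen_le[simp]: "llen (list_encode L) = length L" by (simp add: llen_eq)
lemma lnth_le[simp]: "i < length L \<Longrightarrow> lnth (list_encode L) i = L ! i" by (simp add: lnth_eq)

lemma lift2: "r1 (\<lambda>x. F (pf x) (ps x)) \<Longrightarrow> r1 f \<Longrightarrow> r1 g \<Longrightarrow> r1 (\<lambda>x. F (f x) (g x))"
  using r1_comp[of "\<lambda>x. F (pf x) (ps x)" "\<lambda>x. prod_encode (f x, g x)"] r1_pe by simp

lemma r1_lhd: "r1 f \<Longrightarrow> r1 (\<lambda>x. lhd (f x))" unfolding lhd_def by (intro r1I)
lemma r1_ltl: "r1 f \<Longrightarrow> r1 (\<lambda>x. ltl (f x))" unfolding ltl_def by (intro r1I)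
lemma r1_ltl0: "r1 ltl" using r1_ltl[OF r1_id] by simp
lemma r1_lcons: "r1 f \<Longrightarrow> r1 g \<Longrightarrow> r1 (\<lambda>x. lcons (f x) (g x))" unfolding lcons_def by (intro r1I)
lemma r1_lnth: "r1 f \<Longrightarrow> r1 g \<Longrightarrow> r1 (\<lambda>x. lnth (f x) (g x))"
  unfolding lnth_def by (intro r1_lhd r1_iter r1_ltl0)
lemma r1_llen: "r1 f \<Longrightarrow> r1 (\<lambda>x. llen (f x))"
proof -
  assume f: "r1 f"
  have "r1 (\<lambda>x. llen x)" unfolding llen_def
    by (intro r1_sum r1_if rP_eq r1_iter r1_ltl0 r1_fst r1_snd r1_id r1_const)
  then show ?thesis using r1_comp[OF _ f] by blast
qed

lemmas r1L = r1I r1_lhd r1_ltl r1_lcons r1_lnth r1_llen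



abbreviation "nE n \<equiv> pf n"
abbreviation "nC n \<equiv> pf (ps n)"
abbreviation "nV n \<equiv> ps (ps n)"
abbreviation "node e c v \<equiv> prod_encode (e, prod_encode (c, v))"

lemma pe_split[simp]: "prod_encode (pf e, ps e) = e"
  by (metis prod.collapse prod_decode_inverse)

definition EB :: "(nat \<Rightarrow> nat) \<Rightarrow> nat \<Rightarrow> (nat \<Rightarrow> bool) \<Rightarrow> bool" where
  "EB nd i \<Phi> \<longleftrightarrow> (\<exists>j<i. \<Phi> (nd j))"

definition JustG :: "(nat \<Rightarrow> nat) \<Rightarrow> nat \<Rightarrow> nat \<Rightarrow> bool" where
  "JustG nd i n \<longleftrightarrow>
   (pf (nE n) = 0 \<and> nV n = 0)
 \<or> (pf (nE n) = 1 \<and> nC n \<noteq> 0 \<and> nV n = Suc (lhd (nC n)))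
 \<or> (pf (nE n) = 2 \<and> ps (nE n) < llen (nC n) \<and> nV n = lnth (nC n) (ps (nE n)))
 \<or> (pf (nE n) = 3 \<and> EB nd i (\<lambda>m. nE m = pf (ps (nE n)) \<and> nV m = nV n \<and> llen (nC m) = llen (ps (ps (nE n)))
        \<and> (\<forall>q<llen (ps (ps (nE n))). EB nd i (\<lambda>m'. m' = node (lnth (ps (ps (nE n))) q) (nC n) (lnth (nC m) q)))))
 \<or> (pf (nE n) = 4 \<and> nC n \<noteq> 0 \<and>
      ((lhd (nC n) = 0 \<and> EB nd i (\<lambda>m. m = node (pf (ps (nE n))) (ltl (nC n)) (nV n)))
     \<or> (lhd (nC n) \<noteq> 0 \<and> EB nd i (\<lambda>m. nE m = nE n \<and> nC m = lcons (lhd (nC n) - 1) (ltl (nC n))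
          \<and> EB nd i (\<lambda>m'. m' = node (ps (ps (nE n))) (lcons (lhd (nC n) - 1) (lcons (nV m) (ltl (nC n)))) (nV n))))))
 \<or> (pf (nE n) = 5 \<and> EB nd i (\<lambda>m. m = node (ps (nE n)) (lcons (nV n) (nC n)) 0)
      \<and> (\<forall>z<nV n. EB nd i (\<lambda>m. nE m = ps (nE n) \<and> nC m = lcons z (nC n) \<and> 0 < nV m)))"

definition Valid :: "nat \<Rightarrow> bool" where
  "Valid d \<longleftrightarrow> (\<forall>i<llen d. JustG (lnth d) i (lnth d i))"

abbreviation "R m \<equiv> run (nE m) (list_decode (nC m)) (nV m)"

lemma sound:
  assumes V: "Valid d"
  shows "i < llen d \<Longrightarrow> R (lnth d i)"
proof (induction i rule: less_induct)
  case (less i)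
  have EBr: "\<exists>m. \<Phi> m \<and> R m" if ebh: "EB (lnth d) i \<Phi>" for \<Phi>
  proof -
    obtain j where j: "j < i" "\<Phi> (lnth d j)" using ebh unfolding EB_def by blast
    then have "R (lnth d j)" using less.IH less.prems by simp
    then show ?thesis using j by blast
  qed
  let ?n = "lnth d i"
  define e where "e = nE ?n"
  define c where "c = nC ?n"
  define v where "v = nV ?n"
  define p where "p = ps e"
  have ee: "e = prod_encode (pf e, p)" by (simp add: p_def)
  have J: "JustG (lnth d) i ?n" using V less.prems by (simp add: Valid_def)
  have goal: "run e (list_decode c) v"
    using J unfolding JustG_def e_def[symmetric] c_def[symmetric] v_def[symmetric] p_def[symmetric]
  proof (elim disjE conjE)
    assume a: "pf e = 0" "v = 0"
    then have "e = prod_encode (0, p)" using ee by simp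
    then show ?thesis using a run.zero by simp
  next
    assume a: "pf e = 1" "c \<noteq> 0" "v = Suc (lhd c)"
    have "e = prod_encode (1, p)" using ee a by simp
    then show ?thesis using a ld_cons[OF a(2)] run.succ by simp
  next
    assume a: "pf e = 2" "p < llen c" "v = lnth c p"
    have "e = prod_encode (2, p)" using ee a by simp
    then show ?thesis using a run.proj[of p "list_decode c"] by (simp add: llen_eq lnth_eq)
  next
    assume a: "pf e = 3" and b: "EB (lnth d) i (\<lambda>m. nE m = pf p \<and> nV m = v \<and> llen (nC m) = llen (ps p) \<and>
        (\<forall>q<llen (ps p). EB (lnth d) i (\<lambda>m'. m' = node (lnth (ps p) q) c (lnth (nC m) q))))"
    obtain m where m: "nE m = pf p" "nV m = v" "llen (nC m) = llen (ps p)"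
      "\<forall>q<llen (ps p). EB (lnth d) i (\<lambda>m'. m' = node (lnth (ps p) q) c (lnth (nC m) q))" "R m"
      using EBr[OF b] by blast
    have "list_all2 (\<lambda>g y. run g (list_decode c) y) (list_decode (ps p)) (list_decode (nC m))"
    proof (rule list_all2_all_nthI)
      show "length (list_decode (ps p)) = length (list_decode (nC m))" using m(3) by (simp add: llen_eq)
    next
      fix q assume q: "q < length (list_decode (ps p))"
      have "EB (lnth d) i (\<lambda>m'. m' = node (lnth (ps p) q) c (lnth (nC m) q))"
        using m(4) q by (simp add: llen_eq)
      then obtain m' where "m' = node (lnth (ps p) q) c (lnth (nC m) q)" "R m'"
        using EBr by blast
      then show "run (list_decode (ps p) ! q) (list_decode c) (list_decode (nC m) ! q)"
        using q m(3) by (simp add: lnth_eq llen_eq)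
    qed
    moreover have "run (pf p) (list_decode (nC m)) v" using m(1,2,5) by simp
    ultimately have "run (prod_encode (3, prod_encode (pf p, list_encode (list_decode (ps p))))) (list_decode c) v"
      by (rule run.comp)
    then have "run (prod_encode (3, prod_encode (pf p, ps p))) (list_decode c) v"
      by (simp only: list_decode_inverse)
    then show ?thesis using ee a by simp
  next
    assume a: "pf e = 4" "c \<noteq> 0" "lhd c = 0" and b: "EB (lnth d) i (\<lambda>m. m = node (pf p) (ltl c) v)"
    obtain m where "m = node (pf p) (ltl c) v" "R m" using EBr[OF b] by blast
    then have "run (pf p) (list_decode (ltl c)) v" by simp
    from run.prim0[OF this, of "ps p"] have "run (prod_encode (4, p)) (0 # list_decode (ltl c)) v" by simp
    have "e = prod_encode (4, p)" using ee a by simp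
    then show ?thesis using a ld_cons[OF a(2)] \<open>run (prod_encode (4, p)) _ v\<close> by simp
  next
    assume a: "pf e = 4" "c \<noteq> 0" "lhd c \<noteq> 0" and b: "EB (lnth d) i (\<lambda>m. nE m = e \<and> nC m = lcons (lhd c - 1) (ltl c)
          \<and> EB (lnth d) i (\<lambda>m'. m' = node (ps p) (lcons (lhd c - 1) (lcons (nV m) (ltl c))) v))"
    obtain m where m: "nE m = e" "nC m = lcons (lhd c - 1) (ltl c)" "R m"
      "EB (lnth d) i (\<lambda>m'. m' = node (ps p) (lcons (lhd c - 1) (lcons (nV m) (ltl c))) v)"
      using EBr[OF b] by blast
    obtain m' where "m' = node (ps p) (lcons (lhd c - 1) (lcons (nV m) (ltl c))) v" "R m'"
      using EBr[OF m(4)] by blast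
    then have r2: "run (ps p) ((lhd c - 1) # nV m # list_decode (ltl c)) v" by simp
    have r1: "run (prod_encode (4, prod_encode (pf p, ps p))) ((lhd c - 1) # list_decode (ltl c)) (nV m)"
    proof -
      have "e = prod_encode (4, prod_encode (pf p, ps p))" using ee a(1) by simp
      moreover have "list_decode (nC m) = (lhd c - 1) # list_decode (ltl c)" using m(2) by simp
      ultimately show ?thesis using m(1,3) by simp
    qed
    from run.primS[OF r1 r2] have "run (prod_encode (4, prod_encode (pf p, ps p))) (Suc (lhd c - 1) # list_decode (ltl c)) v" .
    then show ?thesis using ee a ld_cons[OF a(2)] by simp
  next
    assume a: "pf e = 5" and b: "EB (lnth d) i (\<lambda>m. m = node p (lcons v c) 0)"
      and b2: "\<forall>z<v. EB (lnth d) i (\<lambda>m. nE m = p \<and> nC m = lcons z c \<and> 0 < nV m)"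
    obtain m where "m = node p (lcons v c) 0" "R m" using EBr[OF b] by blast
    then have r1: "run p (v # list_decode c) 0" by simp
    have r2: "\<forall>z<v. \<exists>w. run p (z # list_decode c) w \<and> 0 < w"
    proof (intro allI impI)
      fix z assume "z < v"
      then obtain m where "nE m = p" "nC m = lcons z c" "0 < nV m" "R m" using EBr b2 by blast
      then show "\<exists>w. run p (z # list_decode c) w \<and> 0 < w" by auto
    qed
    from run.mu[OF r1 r2] show ?thesis using ee a by simp
  qed
  then show ?case by (simp add: e_def c_def v_def)
qed



definition ValidL :: "nat list \<Rightarrow> bool" where
  "ValidL L \<longleftrightarrow> (\<forall>i<length L. JustG ((!) L) i (L ! i))"

lemma EB_cong: "(\<And>j. j < i \<Longrightarrow> nd j = nd' j) \<Longrightarrow> EB nd i = EB nd' i"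
  by (auto simp: EB_def fun_eq_iff)

lemma JustG_cong: "(\<And>j. j < i \<Longrightarrow> nd j = nd' j) \<Longrightarrow> JustG nd i n = JustG nd' i n"
  unfolding JustG_def by (simp only: EB_cong[of i nd nd'])

lemma Valid_le: "Valid (list_encode L) \<longleftrightarrow> ValidL L"
proof -
  have "JustG (lnth (list_encode L)) i (L ! i) = JustG ((!) L) i (L ! i)" if "i < length L" for i
    by (rule JustG_cong) (use that in simp)
  then show ?thesis unfolding Valid_def ValidL_def by simp
qed

lemma EB_monoP: "EB nd i \<Phi> \<Longrightarrow> (\<And>m. \<Phi> m \<Longrightarrow> \<Psi> m) \<Longrightarrow> EB nd i \<Psi>"
  by (auto simp: EB_def)

lemma JustG_mono:
  assumes h: "\<And>\<Phi>. EB nd i \<Phi> \<Longrightarrow> EB nd' i2 \<Phi>" and J: "JustG nd i n"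
  shows "JustG nd' i2 n"
  using J[unfolded JustG_def]
proof (elim disjE conjE)
  assume a: "pf (nE n) = 3" and
    b: "EB nd i (\<lambda>m. nE m = pf (ps (nE n)) \<and> nV m = nV n \<and> llen (nC m) = llen (ps (ps (nE n))) \<and>
        (\<forall>q<llen (ps (ps (nE n))). EB nd i (\<lambda>m'. m' = node (lnth (ps (ps (nE n))) q) (nC n) (lnth (nC m) q))))"
  have "EB nd i (\<lambda>m. nE m = pf (ps (nE n)) \<and> nV m = nV n \<and> llen (nC m) = llen (ps (ps (nE n))) \<and>
        (\<forall>q<llen (ps (ps (nE n))). EB nd' i2 (\<lambda>m'. m' = node (lnth (ps (ps (nE n))) q) (nC n) (lnth (nC m) q))))"
    by (rule EB_monoP[OF b]) (use h in blast)
  then have "EB nd' i2 (\<lambda>m. nE m = pf (ps (nE n)) \<and> nV m = nV n \<and> llen (nC m) = llen (ps (ps (nE n))) \<and>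
        (\<forall>q<llen (ps (ps (nE n))). EB nd' i2 (\<lambda>m'. m' = node (lnth (ps (ps (nE n))) q) (nC n) (lnth (nC m) q))))"
    by (rule h)
  then show ?thesis unfolding JustG_def using a by simp
next
  assume a: "pf (nE n) = 4" "nC n \<noteq> 0" "lhd (nC n) \<noteq> 0" and
    b: "EB nd i (\<lambda>m. nE m = nE n \<and> nC m = lcons (lhd (nC n) - 1) (ltl (nC n))
          \<and> EB nd i (\<lambda>m'. m' = node (ps (ps (nE n))) (lcons (lhd (nC n) - 1) (lcons (nV m) (ltl (nC n)))) (nV n)))"
  have "EB nd i (\<lambda>m. nE m = nE n \<and> nC m = lcons (lhd (nC n) - 1) (ltl (nC n))
          \<and> EB nd' i2 (\<lambda>m'. m' = node (ps (ps (nE n))) (lcons (lhd (nC n) - 1) (lcons (nV m) (ltl (nC n)))) (nV n)))"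
    by (rule EB_monoP[OF b]) (use h in blast)
  then have "EB nd' i2 (\<lambda>m. nE m = nE n \<and> nC m = lcons (lhd (nC n) - 1) (ltl (nC n))
          \<and> EB nd' i2 (\<lambda>m'. m' = node (ps (ps (nE n))) (lcons (lhd (nC n) - 1) (lcons (nV m) (ltl (nC n)))) (nV n)))"
    by (rule h)
  then show ?thesis unfolding JustG_def using a by simp
next
  assume a: "pf (nE n) = 4" "nC n \<noteq> 0" "lhd (nC n) = 0" and
    b: "EB nd i (\<lambda>m. m = node (pf (ps (nE n))) (ltl (nC n)) (nV n))"
  from h[OF b] show ?thesis unfolding JustG_def using a by simp
next
  assume a: "pf (nE n) = 5" and b: "EB nd i (\<lambda>m. m = node (ps (nE n)) (lcons (nV n) (nC n)) 0)"
    and c: "\<forall>z<nV n. EB nd i (\<lambda>m. nE m = ps (nE n) \<and> nC m = lcons z (nC n) \<and> 0 < nV m)"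
  from h[OF b] c h show ?thesis unfolding JustG_def using a by simp
qed (simp_all add: JustG_def)

lemma EB_set: "EB ((!) L) (length L) \<Phi> \<longleftrightarrow> (\<exists>m\<in>set L. \<Phi> m)"
  unfolding EB_def
proof
  assume "\<exists>j<length L. \<Phi> (L ! j)"
  then show "\<exists>m\<in>set L. \<Phi> m" using nth_mem by blast
next
  assume "\<exists>m\<in>set L. \<Phi> m"
  then show "\<exists>j<length L. \<Phi> (L ! j)" by (auto simp: in_set_conv_nth)
qed

lemma ValidL_append:
  assumes "ValidL L1" "ValidL L2" shows "ValidL (L1 @ L2)"
  unfolding ValidL_def
proof (intro allI impI)
  fix i assume i: "i < length (L1 @ L2)"
  show "JustG ((!) (L1 @ L2)) i ((L1 @ L2) ! i)"
  proof (cases "i < length L1")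
    case True
    have "JustG ((!) L1) i (L1 ! i)" using assms(1) True by (simp add: ValidL_def)
    then have "JustG ((!) (L1 @ L2)) i (L1 ! i)"
    proof (rule JustG_mono[of "(!) L1" i, rotated])
      fix \<Phi> assume "EB ((!) L1) i \<Phi>"
      then obtain j where "j < i" "\<Phi> (L1 ! j)" by (auto simp: EB_def)
      then show "EB ((!) (L1 @ L2)) i \<Phi>" unfolding EB_def using True
        by (intro exI[of _ j]) (simp add: nth_append)
    qed
    then show ?thesis using True by (simp add: nth_append)
  next
    case False
    let ?i = "i - length L1"
    have "JustG ((!) L2) ?i (L2 ! ?i)" using assms(2) False i by (simp add: ValidL_def)
    moreover have e: "(L1 @ L2) ! i = L2 ! ?i" using False by (simp add: nth_append)
    have "JustG ((!) (L1 @ L2)) i (L2 ! ?i)" using \<open>JustG ((!) L2) ?i (L2 ! ?i)\<close>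
    proof (rule JustG_mono[of "(!) L2" ?i, rotated])
      fix \<Phi> assume "EB ((!) L2) ?i \<Phi>"
      then obtain j where "j < ?i" "\<Phi> (L2 ! j)" by (auto simp: EB_def)
      then show "EB ((!) (L1 @ L2)) i \<Phi>" unfolding EB_def
        by (intro exI[of _ "j + length L1"]) (auto simp: nth_append)
    qed
    then show ?thesis using e by simp
  qed
qed

lemma ValidL_concat: "(\<And>L. L \<in> set Ls \<Longrightarrow> ValidL L) \<Longrightarrow> ValidL (concat Ls)"
  by (induction Ls) (simp add: ValidL_def, simp add: ValidL_append)

lemma ValidL_snoc:
  assumes "ValidL L" "JustG ((!) L) (length L) n" shows "ValidL (L @ [n])"
  unfolding ValidL_def
proof (intro allI impI)
  fix i assume i: "i < length (L @ [n])"
  show "JustG ((!) (L @ [n])) i ((L @ [n]) ! i)"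
  proof (cases "i < length L")
    case True
    have "JustG ((!) L) i (L ! i)" using assms(1) True by (simp add: ValidL_def)
    then show ?thesis using True JustG_cong[of i "(!) L" "(!) (L @ [n])"] by (simp add: nth_append)
  next
    case False
    then have "i = length L" using i by simp
    then show ?thesis using assms(2) JustG_cong[of i "(!) L" "(!) (L @ [n])"] by (simp add: nth_append)
  qed
qed

lemma JustG_set: "JustG ((!) L) (length L) n = JustG ((!) L) (length L) n" ..

lemma lhd_Suc[simp]: "lhd (Suc (prod_encode (x, y))) = x" by (simp add: lhd_def)
lemma ltl_Suc[simp]: "ltl (Suc (prod_encode (x, y))) = y" by (simp add: ltl_def)
lemma lhd_le[simp]: "lhd (list_encode (x # xs)) = x" by (simp add: lhd_def)
lemma ltl_le[simp]: "ltl (list_encode (x # xs)) = list_encode xs" by (simp add: ltl_def)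

lemma l2_choose:
  "list_all2 (\<lambda>g y. P g y \<and> (\<exists>L. Q g y L)) gs ys \<Longrightarrow>
   \<exists>Ls. length Ls = length gs \<and> (\<forall>q<length gs. Q (gs ! q) (ys ! q) (Ls ! q))"
proof (induction gs ys rule: list_all2_induct)
  case Nil then show ?case by simp
next
  case (Cons g gs y ys)
  then obtain L Ls where "Q g y L" "length Ls = length gs" "\<forall>q<length gs. Q (gs ! q) (ys ! q) (Ls ! q)" by blast
  then show ?case by (intro exI[of _ "L # Ls"]) (auto simp: nth_Cons split: nat.split)
qed

lemma complete: "run e xs v \<Longrightarrow> \<exists>L. ValidL L \<and> node e (list_encode xs) v \<in> set L"
proof (induction e xs v rule: run.induct)
  case (zero p xs)
  have "ValidL ([] @ [node (prod_encode (0, p)) (list_encode xs) 0])"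
    by (rule ValidL_snoc) (auto simp: ValidL_def JustG_def)
  then show ?case by auto
next
  case (succ p x xs)
  have "ValidL ([] @ [node (prod_encode (1, p)) (list_encode (x # xs)) (Suc x)])"
    by (rule ValidL_snoc) (auto simp: ValidL_def JustG_def)
  then show ?case by auto
next
  case (proj i xs)
  have "ValidL ([] @ [node (prod_encode (2, i)) (list_encode xs) (xs ! i)])"
    by (rule ValidL_snoc) (use proj in \<open>auto simp: ValidL_def JustG_def\<close>)
  then show ?case by auto
next
  case (comp xs gs ys f v)
  obtain Ls where Ls: "length Ls = length gs"
    "\<forall>q<length gs. ValidL (Ls ! q) \<and> node (gs ! q) (list_encode xs) (ys ! q) \<in> set (Ls ! q)"
    using l2_choose[OF comp.IH(1)] by blast
  obtain Lf where Lf: "ValidL Lf" "node f (list_encode ys) v \<in> set Lf" using comp.IH(2) by blast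
  have len: "length ys = length gs" using list_all2_lengthD[OF comp.IH(1)] by simp
  let ?L0 = "concat Ls @ Lf"
  have V0: "ValidL ?L0"
    by (intro ValidL_append ValidL_concat Lf(1)) (metis Ls in_set_conv_nth)
  have inL: "node (gs ! q) (list_encode xs) (ys ! q) \<in> set ?L0" if "q < length gs" for q
    using Ls that by (auto simp: in_set_conv_nth[of _ Ls] intro!: bexI[of _ "Ls ! q"])
  let ?n = "node (prod_encode (3, prod_encode (f, list_encode gs))) (list_encode xs) v"
  have "\<exists>m\<in>set ?L0. nE m = f \<and> nV m = v \<and> llen (nC m) = llen (list_encode gs) \<and>
     (\<forall>q<llen (list_encode gs). \<exists>m'\<in>set ?L0. m' = node (lnth (list_encode gs) q) (list_encode xs) (lnth (nC m) q))"
  proof (rule bexI[of _ "node f (list_encode ys) v"])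
    show "node f (list_encode ys) v \<in> set ?L0" using Lf(2) by simp
    show "nE (node f (list_encode ys) v) = f \<and> nV (node f (list_encode ys) v) = v \<and>
      llen (nC (node f (list_encode ys) v)) = llen (list_encode gs) \<and>
      (\<forall>q<llen (list_encode gs). \<exists>m'\<in>set ?L0. m' = node (lnth (list_encode gs) q) (list_encode xs) (lnth (nC (node f (list_encode ys) v)) q))"
      using inL len by simp
  qed
  then have "JustG ((!) ?L0) (length ?L0) ?n"
    unfolding JustG_def EB_set by simp
  then have "ValidL (?L0 @ [?n])" by (rule ValidL_snoc[OF V0])
  then show ?case by (intro exI[of _ "?L0 @ [?n]"]) simp
next
  case (prim0 f xs v g)
  obtain Lf where Lf: "ValidL Lf" "node f (list_encode xs) v \<in> set Lf" using prim0.IH by blast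
  let ?n = "node (prod_encode (4, prod_encode (f, g))) (list_encode (0 # xs)) v"
  have "\<exists>m\<in>set Lf. m = node f (list_encode xs) v" using Lf(2) by blast
  then have "JustG ((!) Lf) (length Lf) ?n"
    unfolding JustG_def EB_set by simp
  then have "ValidL (Lf @ [?n])" by (rule ValidL_snoc[OF Lf(1)])
  then show ?case by (intro exI[of _ "Lf @ [?n]"]) simp
next
  case (primS f g n xs u v)
  obtain L1 where L1: "ValidL L1" "node (prod_encode (4, prod_encode (f, g))) (list_encode (n # xs)) u \<in> set L1"
    using primS.IH(1) by blast
  obtain L2 where L2: "ValidL L2" "node g (list_encode (n # u # xs)) v \<in> set L2" using primS.IH(2) by blast
  let ?L0 = "L1 @ L2"
  let ?n = "node (prod_encode (4, prod_encode (f, g))) (list_encode (Suc n # xs)) v"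
  have "\<exists>m\<in>set ?L0. nE m = prod_encode (4, prod_encode (f, g)) \<and> nC m = lcons n (list_encode xs) \<and>
     (\<exists>m'\<in>set ?L0. m' = node g (lcons n (lcons (nV m) (list_encode xs))) v)"
    by (rule bexI[of _ "node (prod_encode (4, prod_encode (f, g))) (list_encode (n # xs)) u"]) (use L1(2) L2(2) in simp_all)
  then have "JustG ((!) ?L0) (length ?L0) ?n"
    unfolding JustG_def EB_set by simp
  then have "ValidL (?L0 @ [?n])" by (rule ValidL_snoc[OF ValidL_append[OF L1(1) L2(1)]])
  then show ?case by (intro exI[of _ "?L0 @ [?n]"]) simp
next
  case (mu f y xs)
  obtain Lf where Lf: "ValidL Lf" "node f (list_encode (y # xs)) 0 \<in> set Lf" using mu.IH(1) by blast
  have "\<forall>z. \<exists>wL. z < y \<longrightarrow> (ValidL (snd wL) \<and> node f (list_encode (z # xs)) (fst wL) \<in> set (snd wL) \<and> 0 < fst wL)"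
    using mu.IH(2) by fastforce
  then obtain wL where wL: "\<And>z. z < y \<Longrightarrow> ValidL (snd (wL z)) \<and> node f (list_encode (z # xs)) (fst (wL z)) \<in> set (snd (wL z)) \<and> 0 < fst (wL z)"
    by metis
  let ?L0 = "concat (map (\<lambda>z. snd (wL z)) [0..<y]) @ Lf"
  have V0: "ValidL ?L0"
    by (intro ValidL_append ValidL_concat Lf(1)) (use wL in auto)
  have inL: "node f (list_encode (z # xs)) (fst (wL z)) \<in> set ?L0" if "z < y" for z
    using wL[OF that] that by auto
  let ?n = "node (prod_encode (5, f)) (list_encode xs) y"
  have "JustG ((!) ?L0) (length ?L0) ?n"
    unfolding JustG_def EB_set
  proof (intro disjI2 conjI)
    show "\<exists>m\<in>set ?L0. m = node (ps (nE ?n)) (lcons (nV ?n) (nC ?n)) 0" using Lf(2) by auto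
    show "\<forall>z<nV ?n. \<exists>m\<in>set ?L0. nE m = ps (nE ?n) \<and> nC m = lcons z (nC ?n) \<and> 0 < nV m"
    proof (intro allI impI)
      fix z assume z: "z < nV ?n"
      show "\<exists>m\<in>set ?L0. nE m = ps (nE ?n) \<and> nC m = lcons z (nC ?n) \<and> 0 < nV m"
        by (rule bexI[of _ "node f (list_encode (z # xs)) (fst (wL z))"]) (use z inL wL in simp_all)
    qed
  qed simp
  then have "ValidL (?L0 @ [?n])" by (rule ValidL_snoc[OF V0])
  then show ?case by (intro exI[of _ "?L0 @ [?n]"]) simp
qed



definition Dst :: "nat \<Rightarrow> nat \<Rightarrow> nat \<Rightarrow> bool" where
  "Dst t e z \<longleftrightarrow> (\<exists>d<t. Valid d \<and> (\<exists>i<llen d. nE (lnth d i) = e \<and> nC (lnth d i) = lcons z 0))"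

lemma W_Dst: "z \<in> W e \<longleftrightarrow> (\<exists>t. Dst t e z)"
proof
  assume "z \<in> W e"
  then obtain v where "run e [z] v" by (auto simp: W_def)
  from complete[OF this] obtain L where L: "ValidL L" "node e (list_encode [z]) v \<in> set L" by blast
  then obtain i where i: "i < length L" "L ! i = node e (list_encode [z]) v" by (auto simp: in_set_conv_nth)
  have "Dst (Suc (list_encode L)) e z" unfolding Dst_def
    using L(1) i by (intro exI[of _ "list_encode L"]) (auto simp: Valid_le lcons_def intro!: exI[of _ i])
  then show "\<exists>t. Dst t e z" by blast
next
  assume "\<exists>t. Dst t e z"
  then obtain d i where "Valid d" "i < llen d" "nE (lnth d i) = e" "nC (lnth d i) = lcons z 0"
    by (auto simp: Dst_def)
  then have "run e [z] (nV (lnth d i))" using sound[of d i] by simp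
  then show "z \<in> W e" by (auto simp: W_def)
qed

lemma Dst_mono: "Dst t e z \<Longrightarrow> t \<le> t' \<Longrightarrow> Dst t' e z"
  unfolding Dst_def by (blast intro: less_le_trans)

lemma liftP3: "rP (\<lambda>x. F (pf x) (pf (ps x)) (ps (ps x))) \<Longrightarrow> r1 f \<Longrightarrow> r1 g \<Longrightarrow> r1 h \<Longrightarrow>
  rP (\<lambda>x. F (f x) (g x) (h x))"
  using rP_comp[of "\<lambda>x. F (pf x) (pf (ps x)) (ps (ps x))" "\<lambda>x. prod_encode (f x, prod_encode (g x, h x))"] r1_pe
  by simp

lemma rP_Dst0: "rP (\<lambda>x. Dst (pf x) (pf (ps x)) (ps (ps x)))"
  unfolding Dst_def Valid_def JustG_def EB_def
  by (intro r1L)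

lemma rP_Dst: "r1 f \<Longrightarrow> r1 g \<Longrightarrow> r1 h \<Longrightarrow> rP (\<lambda>x. Dst (f x) (g x) (h x))"
  by (rule liftP3[OF rP_Dst0])



definition AG :: "nat \<Rightarrow> nat \<Rightarrow> nat \<Rightarrow> nat \<Rightarrow> nat \<Rightarrow> nat \<Rightarrow> bool" where
  "AG t a b n m j \<longleftrightarrow> j \<le> t \<and> (\<forall>u<j. Dst t a (prod_encode (u, n)) \<longleftrightarrow> Dst t b (prod_encode (u, m)))"
definition GG :: "nat \<Rightarrow> nat \<Rightarrow> nat \<Rightarrow> nat \<Rightarrow> nat \<Rightarrow> bool" where
  "GG a b n m j \<longleftrightarrow> (\<exists>t. AG t a b n m j)"
definition HA :: "nat \<Rightarrow> nat \<Rightarrow> nat \<Rightarrow> nat \<Rightarrow> nat \<Rightarrow> nat \<Rightarrow> bool" where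
  "HA t a b n y j \<longleftrightarrow> (\<exists>m<Suc y. AG t a b n m j)"
definition Hh :: "nat \<Rightarrow> nat \<Rightarrow> nat \<Rightarrow> nat \<Rightarrow> nat \<Rightarrow> bool" where
  "Hh a b n y j \<longleftrightarrow> (\<exists>m<Suc y. GG a b n m j)"

lemma ex_HA: "(\<exists>t. HA t a b n y j) \<longleftrightarrow> Hh a b n y j"
  by (auto simp: HA_def Hh_def GG_def)

definition colA :: "nat \<Rightarrow> nat \<Rightarrow> nat \<Rightarrow> nat set" where
  "colA a b n = {w. Hh a b n (pf w) (Suc (ps w))}"
definition colB :: "nat \<Rightarrow> nat \<Rightarrow> nat \<Rightarrow> nat set" where
  "colB a b n = {w. Hh a b n (pf w) (ps w)}"

lemma Dst_W: "Dst t e z \<Longrightarrow> z \<in> W e" using W_Dst by blast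

lemma stab: "\<exists>T. \<forall>u<(j::nat). \<forall>t\<ge>T. (Dst t e (g u) \<longleftrightarrow> g u \<in> W e)"
proof (induction j)
  case 0 then show ?case by simp
next
  case (Suc j)
  then obtain T where T: "\<forall>u<j. \<forall>t\<ge>T. (Dst t e (g u) \<longleftrightarrow> g u \<in> W e)" by blast
  show ?case
  proof (cases "g j \<in> W e")
    case True
    then obtain t0 where "Dst t0 e (g j)" using W_Dst by blast
    then have "\<forall>t\<ge>max T t0. (Dst t e (g j) \<longleftrightarrow> g j \<in> W e)" using True Dst_mono by auto
    then show ?thesis using T by (intro exI[of _ "max T t0"]) (auto simp: less_Suc_eq)
  next
    case False
    then have "\<forall>t. \<not> Dst t e (g j)" using Dst_W by blast
    then show ?thesis using T False by (intro exI[of _ T]) (auto simp: less_Suc_eq)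
  qed
qed

lemma GG_down: "GG a b n m j \<Longrightarrow> j' \<le> j \<Longrightarrow> GG a b n m j'"
  unfolding GG_def AG_def by (meson le_trans less_le_trans)

lemma GG_0: "GG a b n m 0" unfolding GG_def AG_def by simp

lemma GG_all_iff: "(\<forall>j. GG a b n m j) \<longleftrightarrow> col (W a) n = col (W b) m"
proof
  assume eq: "col (W a) n = col (W b) m"
  show "\<forall>j. GG a b n m j"
  proof
    fix j
    obtain T1 where T1: "\<forall>u<j. \<forall>t\<ge>T1. (Dst t a (prod_encode (u, n)) \<longleftrightarrow> prod_encode (u, n) \<in> W a)"
      using stab[of j a "\<lambda>u. prod_encode (u, n)"] by blast
    obtain T2 where T2: "\<forall>u<j. \<forall>t\<ge>T2. (Dst t b (prod_encode (u, m)) \<longleftrightarrow> prod_encode (u, m) \<in> W b)"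
      using stab[of j b "\<lambda>u. prod_encode (u, m)"] by blast
    have "AG (max j (max T1 T2)) a b n m j"
      unfolding AG_def
    proof (intro conjI allI impI)
      fix u assume u: "u < j"
      have "prod_encode (u, n) \<in> W a \<longleftrightarrow> prod_encode (u, m) \<in> W b"
        using eq unfolding col_def by blast
      then show "Dst (max j (max T1 T2)) a (prod_encode (u, n)) \<longleftrightarrow> Dst (max j (max T1 T2)) b (prod_encode (u, m))"
        using T1 T2 u by simp
    qed simp
    then show "GG a b n m j" unfolding GG_def by blast
  qed
next
  assume all: "\<forall>j. GG a b n m j"
  show "col (W a) n = col (W b) m"
  proof (rule ccontr)
    assume "col (W a) n \<noteq> col (W b) m"
    then obtain u where u: "(prod_encode (u, n) \<in> W a) \<noteq> (prod_encode (u, m) \<in> W b)"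
      unfolding col_def by blast
    then obtain t0 where t0: "Dst t0 a (prod_encode (u, n)) \<or> Dst t0 b (prod_encode (u, m))"
      using W_Dst by blast
    let ?j = "Suc (max u t0)"
    obtain t where t: "AG t a b n m ?j" using all unfolding GG_def by blast
    then have tt: "t0 \<le> t" "u < ?j" unfolding AG_def by auto
    have "Dst t a (prod_encode (u, n)) \<longleftrightarrow> Dst t b (prod_encode (u, m))" using t tt(2) unfolding AG_def by blast
    moreover have "Dst t a (prod_encode (u, n)) \<or> Dst t b (prod_encode (u, m))" using t0 tt(1) Dst_mono by blast
    ultimately have "Dst t a (prod_encode (u, n)) \<and> Dst t b (prod_encode (u, m))" by blast
    then show False using u Dst_W by blast
  qed
qed

lemma Hh_down: "Hh a b n y j \<Longrightarrow> j' \<le> j \<Longrightarrow> Hh a b n y j'"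
  unfolding Hh_def using GG_down by blast

lemma diff_finite_iff:
  "finite ((colA a b n - colB a b n) \<union> (colB a b n - colA a b n)) \<longleftrightarrow> (\<exists>m. \<forall>j. GG a b n m j)"
proof -
  have sub: "colA a b n \<subseteq> colB a b n" unfolding colA_def colB_def using Hh_down by fastforce
  let ?D = "colB a b n - colA a b n"
  have D: "?D = {w. Hh a b n (pf w) (ps w) \<and> \<not> Hh a b n (pf w) (Suc (ps w))}"
    unfolding colA_def colB_def by blast
  have fD: "finite ?D \<longleftrightarrow> (\<exists>m. \<forall>j. GG a b n m j)"
  proof
    assume "\<exists>m. \<forall>j. GG a b n m j"
    then obtain m0 where m0: "\<forall>j. GG a b n m0 j" by blast
    define S where "S y = {k. Hh a b n y k \<and> \<not> Hh a b n y (Suc k)}" for y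
    have finS: "finite (S y)" for y
    proof -
      have "k1 = k2" if "k1 \<in> S y" "k2 \<in> S y" for k1 k2
      proof (rule ccontr)
        assume "k1 \<noteq> k2"
        then consider "Suc k1 \<le> k2" | "Suc k2 \<le> k1" by linarith
        then show False using that Hh_down unfolding S_def by cases blast+
      qed
      then show ?thesis
        by (metis (no_types, lifting) finite.emptyI finite_insert finite_subset insertI1 subsetI
            equals0I[of "S y"])
    qed
    have "?D \<subseteq> (\<lambda>(y, k). prod_encode (y, k)) ` (SIGMA y:{..<m0}. S y)"
    proof
      fix w assume w: "w \<in> ?D"
      then have h: "Hh a b n (pf w) (ps w)" "\<not> Hh a b n (pf w) (Suc (ps w))" using D by auto
      have "pf w < m0"
      proof (rule ccontr)
        assume "\<not> pf w < m0"
        then have "Hh a b n (pf w) (Suc (ps w))" unfolding Hh_def using m0 by (intro exI[of _ m0]) auto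
        then show False using h by blast
      qed
      then show "w \<in> (\<lambda>(y, k). prod_encode (y, k)) ` (SIGMA y:{..<m0}. S y)"
        using h unfolding S_def by (intro image_eqI[of _ _ "(pf w, ps w)"]) (simp_all del: prod.collapse)
    qed
    moreover have "finite ((\<lambda>(y, k). prod_encode (y, k)) ` (SIGMA y:{..<m0}. S y))"
      using finS by auto
    ultimately show "finite ?D" by (rule finite_subset)
  next
    assume fin: "finite ?D"
    show "\<exists>m. \<forall>j. GG a b n m j"
    proof (rule ccontr)
      assume nog: "\<not> (\<exists>m. \<forall>j. GG a b n m j)"
      have "\<exists>k. Hh a b n y k \<and> \<not> Hh a b n y (Suc k)" for y
      proof -
        have "\<forall>m. \<exists>j. \<not> GG a b n m j" using nog by blast
        then obtain J where J: "\<And>m. \<not> GG a b n m (J m)" by metis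
        let ?K = "Max (J ` {..<Suc y})"
        have "\<not> Hh a b n y ?K"
        proof
          assume "Hh a b n y ?K"
          then obtain m where "m < Suc y" "GG a b n m ?K" unfolding Hh_def by blast
          moreover have "J m \<le> ?K" using \<open>m < Suc y\<close> by simp
          ultimately show False using J GG_down by blast
        qed
        then have ex: "\<exists>k. \<not> Hh a b n y k" by blast
        let ?k = "LEAST k. \<not> Hh a b n y k"
        have nk: "\<not> Hh a b n y ?k" using LeastI_ex[OF ex] .
        have "Hh a b n y 0" unfolding Hh_def using GG_0 by blast
        then have "?k \<noteq> 0" using nk by (metis)
        then obtain k where k: "?k = Suc k" using not0_implies_Suc by blast
        have "Hh a b n y k" using not_less_Least[of k "\<lambda>k. \<not> Hh a b n y k"] k by simp
        then show ?thesis using nk k by auto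
      qed
      then obtain kf where kf: "\<And>y. Hh a b n y (kf y) \<and> \<not> Hh a b n y (Suc (kf y))" by metis
      have "range (\<lambda>y. prod_encode (y, kf y)) \<subseteq> ?D" using kf D by auto
      moreover have "inj (\<lambda>y. prod_encode (y, kf y))" by (auto intro: injI)
      ultimately have "finite (UNIV :: nat set)" using fin by (metis finite_imageD finite_subset)
      then show False by simp
    qed
  qed
  have e: "colA a b n - colB a b n = {}" using sub by blast
  show ?thesis unfolding e Un_empty_left by (rule fD)
qed



lemma run_comp_iff:
  "run (prod_encode (3, prod_encode (f, list_encode gs))) xs v \<longleftrightarrow>
   (\<exists>ys. list_all2 (\<lambda>g y. run g xs y) gs ys \<and> run f ys v)"
proof
  assume "run (prod_encode (3, prod_encode (f, list_encode gs))) xs v"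
  then show "\<exists>ys. list_all2 (\<lambda>g y. run g xs y) gs ys \<and> run f ys v"
    by (cases rule: run.cases) (auto simp: list_encode_eq)
next
  assume "\<exists>ys. list_all2 (\<lambda>g y. run g xs y) gs ys \<and> run f ys v"
  then show "run (prod_encode (3, prod_encode (f, list_encode gs))) xs v" by (auto intro: run.comp)
qed

lemma sigma1_prog:
  assumes rp: "rP (\<lambda>w. Rp (pf w) (ps w))"
  shows "\<exists>M. \<forall>q. (\<exists>v. run M [q] v) \<longleftrightarrow> (\<exists>t. Rp t q)"
proof -
  have "rec 2 (\<lambda>xs. 1 - (\<lambda>ys. (\<lambda>w. if Rp (pf w) (ps w) then 1 else 0) (ys ! 0)) [prod_encode (xs ! 0, xs ! 1)])"
    by (intro rk_sub rk_const comp1 rk_pe rk_proj) (use rp[unfolded rP_def r1_def] in simp_all)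
  then obtain F where F: "\<And>xs. length xs = 2 \<Longrightarrow> run F xs (1 - (if Rp (xs ! 0) (xs ! 1) then 1 else 0))"
    unfolding rec_def by auto
  have F2: "run F [t, q] (if Rp t q then 0 else 1)" for t q using F[of "[t, q]"] by (cases "Rp t q") simp_all
  have F2u: "run F [t, q] r \<Longrightarrow> r = (if Rp t q then 0 else 1)" for t q r using run_det[OF F2] by simp
  show ?thesis
  proof (rule exI[of _ "prod_encode (5, F)"], intro allI iffI)
    fix q assume "\<exists>v. run (prod_encode (5, F)) [q] v"
    then obtain v where "run (prod_encode (5, F)) [q] v" by blast
    then have "run F [v, q] 0" by (cases rule: run.cases) auto
    then show "\<exists>t. Rp t q" using F2u by (metis zero_neq_one)
  next
    fix q assume "\<exists>t. Rp t q"
    let ?L = "LEAST t. Rp t q"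
    have "Rp ?L q" using LeastI_ex[OF \<open>\<exists>t. Rp t q\<close>] .
    then have "run F (?L # [q]) 0" using F2 by (metis)
    moreover have "\<forall>z<?L. \<exists>w. run F (z # [q]) w \<and> 0 < w"
      using F2 not_less_Least by fastforce
    ultimately show "\<exists>v. run (prod_encode (5, F)) [q] v" by (blast intro: run.mu)
  qed
qed

primrec Kc :: "nat \<Rightarrow> nat" where
  "Kc 0 = prod_encode (0, 0)"
| "Kc (Suc n) = prod_encode (3, prod_encode (prod_encode (1, 0), list_encode [Kc n]))"

lemma run_Kc: "run (Kc n) xs n"
proof (induction n)
  case 0 then show ?case by (simp add: run.zero del: prod_encode_eq)
next
  case (Suc n)
  have "run (prod_encode (1, 0)) [n] (Suc n)" by (rule run.succ)
  then show ?case unfolding Kc.simps run_comp_iff using Suc by (intro exI[of _ "[n]"]) simp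
qed

definition hK :: "nat \<Rightarrow> nat" where
  "hK c = prod_encode (3, prod_encode (prod_encode (1, 0), Suc (prod_encode (c, 0))))"

lemma Kc_iter: "Kc n = (hK ^^ n) (prod_encode (0, 0))"
  by (induction n) (simp_all add: hK_def)

lemma r1_hK: "r1 hK" unfolding hK_def by (intro r1L)

definition Qc :: "nat \<Rightarrow> nat \<Rightarrow> nat" where
  "Qc P q = prod_encode (3, prod_encode (P, list_encode [prod_encode (2, 0), Kc q]))"

definition cd :: "nat \<Rightarrow> nat \<Rightarrow> nat \<Rightarrow> nat \<Rightarrow> nat" where
  "cd M P x y = prod_encode (3, prod_encode (M, list_encode [Qc P (prod_encode (x, y))]))"

lemma PE_ex: "\<exists>P. \<forall>a b. run P [a, b] (prod_encode (a, b))"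
proof -
  have "rec 2 (\<lambda>xs. prod_encode (xs ! 0, xs ! 1))" by (intro rk_pe rk_proj) simp_all
  then show ?thesis unfolding rec_def by (metis length_Cons list.size(3) nth_Cons_0 nth_Cons_Suc numeral_2_eq_2 One_nat_def)
qed

lemma run_Qc:
  assumes P: "\<forall>a b. run P [a, b] (prod_encode (a, b))"
  shows "run (Qc P q) [z] r \<longleftrightarrow> r = prod_encode (z, q)"
proof
  assume "run (Qc P q) [z] r"
  then obtain ys where ys: "list_all2 (\<lambda>g y. run g [z] y) [prod_encode (2, 0), Kc q] ys" "run P ys r"
    unfolding Qc_def run_comp_iff by blast
  then obtain y1 y2 where "ys = [y1, y2]" "run (prod_encode (2, 0)) [z] y1" "run (Kc q) [z] y2"
    by (auto simp: list_all2_Cons1)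
  moreover have "run (prod_encode (2, 0)) [z] z" using run.proj[of 0 "[z]"] by simp
  ultimately have "ys = [z, q]" using run_det run_Kc by blast
  then show "r = prod_encode (z, q)" using ys(2) P run_det by blast
next
  assume "r = prod_encode (z, q)"
  moreover have "run (prod_encode (2, 0)) [z] z" using run.proj[of 0 "[z]"] by simp
  ultimately show "run (Qc P q) [z] r" unfolding Qc_def run_comp_iff using P run_Kc
    by (intro exI[of _ "[z, q]"]) auto
qed

lemma W_cd:
  assumes P: "\<forall>a b. run P [a, b] (prod_encode (a, b))"
  shows "z \<in> W (cd M P x y) \<longleftrightarrow> (\<exists>v. run M [prod_encode (z, prod_encode (x, y))] v)"
  unfolding W_def cd_def run_comp_iff using run_Qc[OF P] by (auto simp: list_all2_Cons1)

lemma computable_cd: "computable2 (cd M P)"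
proof -
  have "r1 (\<lambda>w. cd M P (pf w) (ps w))"
    unfolding cd_def Qc_def Kc_iter by (simp; intro r1L r1_iter r1_hK)
  then have "rec 2 (\<lambda>xs. (\<lambda>ys. cd M P (pf (ys ! 0)) (ps (ys ! 0))) [prod_encode (xs ! 0, xs ! 1)])"
    unfolding r1_def by (intro comp1 rk_pe rk_proj) simp_all
  then show ?thesis unfolding computable2_def rec_def
    by (metis length_Cons list.size(3) nth_Cons_0 nth_Cons_Suc numeral_2_eq_2 One_nat_def
        nth_Cons_0 prod_encode_inverse fst_conv snd_conv)
qed



definition SA :: "nat \<Rightarrow> nat \<Rightarrow> nat \<Rightarrow> nat \<Rightarrow> nat \<Rightarrow> bool" where
  "SA t x y c w \<longleftrightarrow> HA t (if pf c = 0 then x else y) (if pf c = 0 then y else x) (ps c) (pf w) (Suc (ps w))"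
definition SB :: "nat \<Rightarrow> nat \<Rightarrow> nat \<Rightarrow> nat \<Rightarrow> nat \<Rightarrow> bool" where
  "SB t x y c w \<longleftrightarrow> HA t (if pf c = 0 then x else y) (if pf c = 0 then y else x) (ps c) (pf w) (ps w)"
definition RA :: "nat \<Rightarrow> nat \<Rightarrow> bool" where
  "RA t q \<longleftrightarrow> SA t (pf (ps q)) (ps (ps q)) (ps (pf q)) (pf (pf q))"
definition RB :: "nat \<Rightarrow> nat \<Rightarrow> bool" where
  "RB t q \<longleftrightarrow> SB t (pf (ps q)) (ps (ps q)) (ps (pf q)) (pf (pf q))"

lemma rP_RA: "rP (\<lambda>w. RA (pf w) (ps w))"
  unfolding RA_def SA_def HA_def AG_def by (intro r1L rP_Dst)
lemma rP_RB: "rP (\<lambda>w. RB (pf w) (ps w))"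
  unfolding RB_def SB_def HA_def AG_def by (intro r1L rP_Dst)

lemma Eset_iff: "Eset x y \<longleftrightarrow> (\<forall>n. \<exists>m. col (W x) n = col (W y) m) \<and> (\<forall>n. \<exists>m. col (W y) n = col (W x) m)"
  unfolding Eset_def by (auto simp: set_eq_iff)

theorem proposition2p7:
  shows "\<exists>f g. computable2 f \<and> computable2 g \<and>
           (\<forall>x y. Eset x y \<longleftrightarrow> E3 (f x y) (g x y))"
proof -
  obtain P where P: "\<forall>a b. run P [a, b] (prod_encode (a, b))" using PE_ex by blast
  obtain MA where MA: "\<forall>q. (\<exists>v. run MA [q] v) \<longleftrightarrow> (\<exists>t. RA t q)" using sigma1_prog[OF rP_RA] by blast
  obtain MB where MB: "\<forall>q. (\<exists>v. run MB [q] v) \<longleftrightarrow> (\<exists>t. RB t q)" using sigma1_prog[OF rP_RB] by blast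
  define ab where "ab x y c = (if pf c = 0 then x else y)" for x y c :: nat
  define ba where "ba x y c = (if pf c = 0 then y else x)" for x y c :: nat
  have cA: "col (W (cd MA P x y)) c = colA (ab x y c) (ba x y c) (ps c)" for x y c
    using MA by (simp add: col_def colA_def W_cd[OF P] RA_def SA_def ab_def ba_def ex_HA)
  have cB: "col (W (cd MB P x y)) c = colB (ab x y c) (ba x y c) (ps c)" for x y c
    using MB by (simp add: col_def colB_def W_cd[OF P] RB_def SB_def ab_def ba_def ex_HA)
  have main: "Eset x y \<longleftrightarrow> E3 (cd MA P x y) (cd MB P x y)" for x y
  proof -
    have "E3 (cd MA P x y) (cd MB P x y) \<longleftrightarrow> (\<forall>c. \<exists>m. col (W (ab x y c)) (ps c) = col (W (ba x y c)) m)"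
      unfolding E3_def cA cB diff_finite_iff GG_all_iff by simp
    also have "\<dots> \<longleftrightarrow> (\<forall>n. \<exists>m. col (W x) n = col (W y) m) \<and> (\<forall>n. \<exists>m. col (W y) n = col (W x) m)"
    proof
      assume h: "\<forall>c. \<exists>m. col (W (ab x y c)) (ps c) = col (W (ba x y c)) m"
      show "(\<forall>n. \<exists>m. col (W x) n = col (W y) m) \<and> (\<forall>n. \<exists>m. col (W y) n = col (W x) m)"
      proof (intro conjI allI)
        fix n
        show "\<exists>m. col (W x) n = col (W y) m" using h[rule_format, of "prod_encode (0, n)"] by (simp add: ab_def ba_def)
        show "\<exists>m. col (W y) n = col (W x) m" using h[rule_format, of "prod_encode (1, n)"] by (simp add: ab_def ba_def)
      qed
    next
      assume "(\<forall>n. \<exists>m. col (W x) n = col (W y) m) \<and> (\<forall>n. \<exists>m. col (W y) n = col (W x) m)"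
      then show "\<forall>c. \<exists>m. col (W (ab x y c)) (ps c) = col (W (ba x y c)) m"
        by (auto simp: ab_def ba_def)
    qed
    finally show ?thesis using Eset_iff by simp
  qed
  show ?thesis
    by (rule exI[of _ "cd MA P"], rule exI[of _ "cd MB P"]) (use computable_cd main in blast)
qed


end
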